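(* Let $P$ be a normal program. Then the well-founded model $WFM(P)$ has a finite number of true atoms if and only if $P$ has the bounded term-size property.
   Context: Programs are over a first-order language with finitely many function and constant symbols. A normal program $P$ is a set of clauses $B \leftarrow L_1,\ldots,L_n$ where $B$ is an atom and each $L_i$ is a literal (an atom $A$ or a negated atom $\neg A$); $\mathcal{H}_P$ is its Herbrand base. A 3-valued interpretation is a pair $I=\langle Tr;Fa\rangle$ of subsets of $\mathcal{H}_P$; an atom $A$ is true in $I$ if $A\in Tr$ and false if $A \in Fa$; $\neg A$ is true in $I$ iff $A$ is false in $I$, and false iff $A$ is true in $I$. For a 3-valued interpretation $I$ and sets $Tr, Fa$ of ground atoms define $True^P_I(Tr)=\{A \mid A$ is not true in $I$, and there is a clause $B\leftarrow L_1,\ldots,L_n$ in $P$ and a ground substitution $\theta$ with $A=B\theta$ such that for every $1\le i\le n$, either $L_i\theta$ is true in $I$ or $L_i\theta\in Tr\}$; $False^P_I(Fa)=\{A \mid A$ is not false in $I$, and for every clause $B\leftarrow L_1,\ldots,L_n$ in $P$ and ground substitution $\theta$ with $A=B\theta$ there is some $i$ with $L_i\theta$ false in $I$ or $L_i\theta\in Fa\}$. Both are monotonic; $\mathcal{T}_I$ is the least fixed point of $True^P_I$ (obtained by iterating from $\emptyset$) and $\mathcal{F}_I$ the greatest fixed point of $False^P_I$ (obtained by iterating from $\mathcal{H}_P$). Define $WFM_0=\langle\emptyset;\emptyset\rangle$, $WFM_{\alpha+1}=WFM_\alpha\cup\langle \mathcal{T}_{WFM_\alpha};\mathcal{F}_{WFM_\alpha}\rangle$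 (componentwise union), and $WFM_\alpha=\bigcup_{\beta<\alpha}WFM_\beta$ for limit ordinals $\alpha$. $WFM(P)$ is $WFM_\delta$ for the least ordinal $\delta$ such that $\mathcal{T}_{WFM_\delta}$ and $\mathcal{F}_{WFM_\delta}$ are both empty; it is the well-founded model of $P$. Bounded term-size: an application of $True^P_I(Tr)$ has the bounded term-size property if there is an integer $L$ such that the size of every ground substitution $\theta$ used to produce an atom in $True^P_I(Tr)$ is less than $L$. The program $P$ has the bounded term-size property if every application of $True^P_I$ used to construct $WFM(P)$ has the bounded term-size property with the same bound $L$. *)

theory Defs
  imports Main
begin

text \<open>Terms over function symbols 'f (constants are 0-ary function symbols) and variables 'v.\<close>
datatype ('f, 'v) trm = Var 'v | Fn 'f "('f, 'v) trm list"

datatype ('p, 'f, 'v) atom = Atom 'p "('f, 'v) trm list"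

datatype ('p, 'f, 'v) lit = Pos "('p, 'f, 'v) atom" | Neg "('p, 'f, 'v) atom"

text \<open>A clause  B <- L1, ..., Ln  is a pair (B, [L1, ..., Ln]).\<close>
type_synonym ('p, 'f, 'v) clause = "('p, 'f, 'v) atom \<times> ('p, 'f, 'v) lit list"

fun tvars :: "('f, 'v) trm \<Rightarrow> 'v set" where
  "tvars (Var x) = {x}"
| "tvars (Fn f ts) = \<Union> (tvars ` set ts)"

fun tsubst :: "('v \<Rightarrow> ('f, 'v) trm) \<Rightarrow> ('f, 'v) trm \<Rightarrow> ('f, 'v) trm" where
  "tsubst \<theta> (Var x) = \<theta> x"
| "tsubst \<theta> (Fn f ts) = Fn f (map (tsubst \<theta>) ts)"

fun tsize :: "('f, 'v) trm \<Rightarrow> nat" where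
  "tsize (Var x) = 1"
| "tsize (Fn f ts) = Suc (sum_list (map tsize ts))"

fun wf_trm :: "('f \<Rightarrow> nat) \<Rightarrow> ('f, 'v) trm \<Rightarrow> bool" where
  "wf_trm ar (Var x) = True"
| "wf_trm ar (Fn f ts) = (length ts = ar f \<and> (\<forall>t\<in>set ts. wf_trm ar t))"

definition ground_trm :: "('f \<Rightarrow> nat) \<Rightarrow> ('f, 'v) trm \<Rightarrow> bool" where
  "ground_trm ar t \<longleftrightarrow> wf_trm ar t \<and> tvars t = {}"

fun avars :: "('p, 'f, 'v) atom \<Rightarrow> 'v set" where
  "avars (Atom p ts) = \<Union> (tvars ` set ts)"

fun asubst :: "('v \<Rightarrow> ('f, 'v) trm) \<Rightarrow> ('p, 'f, 'v) atom \<Rightarrow> ('p, 'f, 'v) atom" where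
  "asubst \<theta> (Atom p ts) = Atom p (map (tsubst \<theta>) ts)"

fun wf_atom :: "('f \<Rightarrow> nat) \<Rightarrow> ('p \<Rightarrow> nat) \<Rightarrow> ('p, 'f, 'v) atom \<Rightarrow> bool" where
  "wf_atom ar par (Atom p ts) = (length ts = par p \<and> (\<forall>t\<in>set ts. wf_trm ar t))"

fun lit_atom :: "('p, 'f, 'v) lit \<Rightarrow> ('p, 'f, 'v) atom" where
  "lit_atom (Pos A) = A"
| "lit_atom (Neg A) = A"

fun lsubst :: "('v \<Rightarrow> ('f, 'v) trm) \<Rightarrow> ('p, 'f, 'v) lit \<Rightarrow> ('p, 'f, 'v) lit" where
  "lsubst \<theta> (Pos A) = Pos (asubst \<theta> A)"
| "lsubst \<theta> (Neg A) = Neg (asubst \<theta> A)"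

definition cvars :: "('p, 'f, 'v) clause \<Rightarrow> 'v set" where
  "cvars c = avars (fst c) \<union> \<Union> ((avars \<circ> lit_atom) ` set (snd c))"

definition wf_clause :: "('f \<Rightarrow> nat) \<Rightarrow> ('p \<Rightarrow> nat) \<Rightarrow> ('p, 'f, 'v) clause \<Rightarrow> bool" where
  "wf_clause ar par c \<longleftrightarrow> wf_atom ar par (fst c) \<and> (\<forall>L\<in>set (snd c). wf_atom ar par (lit_atom L))"

definition normal_program :: "('f \<Rightarrow> nat) \<Rightarrow> ('p \<Rightarrow> nat) \<Rightarrow> ('p, 'f, 'v) clause set \<Rightarrow> bool" where
  "normal_program ar par P \<longleftrightarrow> finite P \<and> (\<forall>c\<in>P. wf_clause ar par c)"

definition herbrand_base :: "('f \<Rightarrow> nat) \<Rightarrow> ('p \<Rightarrow> nat) \<Rightarrow> ('p, 'f, 'v) atom set" where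
  "herbrand_base ar par = {A. wf_atom ar par A \<and> avars A = {}}"

definition ground_subst :: "('f \<Rightarrow> nat) \<Rightarrow> ('p, 'f, 'v) clause \<Rightarrow> ('v \<Rightarrow> ('f, 'v) trm) \<Rightarrow> bool" where
  "ground_subst ar c \<theta> \<longleftrightarrow> (\<forall>x\<in>cvars c. ground_trm ar (\<theta> x))"

definition subst_size :: "('p, 'f, 'v) clause \<Rightarrow> ('v \<Rightarrow> ('f, 'v) trm) \<Rightarrow> nat" where
  "subst_size c \<theta> = (\<Sum>x\<in>cvars c. tsize (\<theta> x))"

type_synonym ('p, 'f, 'v) interp = "('p, 'f, 'v) atom set \<times> ('p, 'f, 'v) atom set"
  \<comment> \<open>a 3-valued interpretation (Tr, Fa)\<close>

fun lit_true :: "('p, 'f, 'v) interp \<Rightarrow> ('p, 'f, 'v) lit \<Rightarrow> bool" where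
  "lit_true I (Pos A) = (A \<in> fst I)"
| "lit_true I (Neg A) = (A \<in> snd I)"

fun lit_false :: "('p, 'f, 'v) interp \<Rightarrow> ('p, 'f, 'v) lit \<Rightarrow> bool" where
  "lit_false I (Pos A) = (A \<in> snd I)"
| "lit_false I (Neg A) = (A \<in> fst I)"

fun lit_in :: "('p, 'f, 'v) lit \<Rightarrow> ('p, 'f, 'v) atom set \<Rightarrow> bool" where
  "lit_in (Pos A) S = (A \<in> S)"
| "lit_in (Neg A) S = False"

definition TrueOp :: "('f \<Rightarrow> nat) \<Rightarrow> ('p, 'f, 'v) clause set \<Rightarrow> ('p, 'f, 'v) interp
    \<Rightarrow> ('p, 'f, 'v) atom set \<Rightarrow> ('p, 'f, 'v) atom set" where
  "TrueOp ar P I Tr = {A. A \<notin> fst I \<and>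
     (\<exists>c\<in>P. \<exists>\<theta>. ground_subst ar c \<theta> \<and> A = asubst \<theta> (fst c) \<and>
        (\<forall>L\<in>set (snd c). lit_true I (lsubst \<theta> L) \<or> lit_in (lsubst \<theta> L) Tr))}"

definition FalseOp :: "('f \<Rightarrow> nat) \<Rightarrow> ('p \<Rightarrow> nat) \<Rightarrow> ('p, 'f, 'v) clause set \<Rightarrow> ('p, 'f, 'v) interp
    \<Rightarrow> ('p, 'f, 'v) atom set \<Rightarrow> ('p, 'f, 'v) atom set" where
  "FalseOp ar par P I Fa = {A \<in> herbrand_base ar par. A \<notin> snd I \<and>
     (\<forall>c\<in>P. \<forall>\<theta>. ground_subst ar c \<theta> \<and> A = asubst \<theta> (fst c) \<longrightarrow>
        (\<exists>L\<in>set (snd c). lit_false I (lsubst \<theta> L) \<or> lit_in (lsubst \<theta> L) Fa))}"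

definition TI :: "('f \<Rightarrow> nat) \<Rightarrow> ('p, 'f, 'v) clause set \<Rightarrow> ('p, 'f, 'v) interp \<Rightarrow> ('p, 'f, 'v) atom set" where
  "TI ar P I = lfp (TrueOp ar P I)"

definition FI :: "('f \<Rightarrow> nat) \<Rightarrow> ('p \<Rightarrow> nat) \<Rightarrow> ('p, 'f, 'v) clause set \<Rightarrow> ('p, 'f, 'v) interp \<Rightarrow> ('p, 'f, 'v) atom set" where
  "FI ar par P I = gfp (FalseOp ar par P I)"

definition wfm_step :: "('f \<Rightarrow> nat) \<Rightarrow> ('p \<Rightarrow> nat) \<Rightarrow> ('p, 'f, 'v) clause set \<Rightarrow> ('p, 'f, 'v) interp \<Rightarrow> ('p, 'f, 'v) interp" where
  "wfm_step ar par P I = (fst I \<union> TI ar P I, snd I \<union> FI ar par P I)"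

text \<open>The transfinite sequence WFM_alpha, represented by the set of all its stages
  (the transfinite iterates from (\<emptyset>;\<emptyset>), closed under successor and under unions,
  i.e. the tower of the inflationary operator wfm_step).\<close>
inductive_set wfm_stages :: "('f \<Rightarrow> nat) \<Rightarrow> ('p \<Rightarrow> nat) \<Rightarrow> ('p, 'f, 'v) clause set \<Rightarrow> ('p, 'f, 'v) interp set"
  for ar par P where
  succ: "I \<in> wfm_stages ar par P \<Longrightarrow> wfm_step ar par P I \<in> wfm_stages ar par P"
| union: "Y \<in> Pow (wfm_stages ar par P) \<Longrightarrow> (\<Union> (fst ` Y), \<Union> (snd ` Y)) \<in> wfm_stages ar par P"
  monos Pow_mono

definition WFM :: "('f \<Rightarrow> nat) \<Rightarrow> ('p \<Rightarrow> nat) \<Rightarrow> ('p, 'f, 'v) clause set \<Rightarrow> ('p, 'f, 'v) interp" where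
  "WFM ar par P = (THE I. I \<in> wfm_stages ar par P \<and> TI ar P I = {} \<and> FI ar par P I = {})"

definition bounded_term_size :: "('f \<Rightarrow> nat) \<Rightarrow> ('p \<Rightarrow> nat) \<Rightarrow> ('p, 'f, 'v) clause set \<Rightarrow> bool" where
  "bounded_term_size ar par P \<longleftrightarrow> (\<exists>L::nat. \<forall>I\<in>wfm_stages ar par P. \<forall>n::nat.
     let Tr = (TrueOp ar P I ^^ n) {} in
     \<forall>A\<in>TrueOp ar P I Tr.
       \<exists>c\<in>P. \<exists>\<theta>. ground_subst ar c \<theta> \<and> A = asubst \<theta> (fst c) \<and>
         (\<forall>L\<in>set (snd c). lit_true I (lsubst \<theta> L) \<or> lit_in (lsubst \<theta> L) Tr) \<and>
         subst_size c \<theta> < L)"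

end

theory Submission imports Defs "HOL-Library.FuncSet" begin

definition ple :: "'a set \<times> 'b set \<Rightarrow> 'a set \<times> 'b set \<Rightarrow> bool" where
  "ple I J \<longleftrightarrow> fst I \<subseteq> fst J \<and> snd I \<subseteq> snd J"

lemma ple_antisym: "ple I J \<Longrightarrow> ple J I \<Longrightarrow> I = J"
  unfolding ple_def by (simp add: prod_eq_iff subset_antisym)

lemma ple_trans: "ple I J \<Longrightarrow> ple J K \<Longrightarrow> ple I K"
  unfolding ple_def by blast

lemma infl: "ple I (wfm_step ar par P I)"
  unfolding ple_def wfm_step_def by auto

definition good where
  "good ar par P m \<longleftrightarrow> (\<forall>x\<in>wfm_stages ar par P. ple x m \<longrightarrow> x = m \<or> ple (wfm_step ar par P x) m)"

lemma L1:
  assumes m: "m \<in> wfm_stages ar par P" and g: "good ar par P m"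
    and n: "n \<in> wfm_stages ar par P"
  shows "ple n m \<or> ple (wfm_step ar par P m) n"
  using n
proof (induction n rule: wfm_stages.induct)
  case (succ I)
  show ?case
  proof (cases "ple (wfm_step ar par P m) I")
    case True
    then show ?thesis using infl ple_trans by blast
  next
    case False
    then have "ple I m" using succ by blast
    then have "I = m \<or> ple (wfm_step ar par P I) m" using g succ.hyps unfolding good_def by blast
    then show ?thesis
    proof
      assume "I = m" then show ?thesis unfolding ple_def by auto
    qed auto
  qed
next
  case (union Y)
  show ?case
  proof (cases "\<forall>y\<in>Y. ple y m")
    case True
    then show ?thesis unfolding ple_def by auto
  next
    case False
    then obtain y where "y \<in> Y" "\<not> ple y m" by blast
    with union have "ple (wfm_step ar par P m) y" by blast
    with \<open>y \<in> Y\<close> show ?thesis unfolding ple_def by auto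
  qed
qed

lemma L2:
  assumes m: "m \<in> wfm_stages ar par P"
  shows "good ar par P m"
  using m
proof (induction m rule: wfm_stages.induct)
  case (succ m)
  show ?case unfolding good_def
  proof (intro ballI impI)
    fix x assume x: "x \<in> wfm_stages ar par P" and xl: "ple x (wfm_step ar par P m)"
    from L1[OF succ.hyps(1) succ.IH x]
    have "ple x m \<or> ple (wfm_step ar par P m) x" .
    then show "x = wfm_step ar par P m \<or> ple (wfm_step ar par P x) (wfm_step ar par P m)"
    proof
      assume "ple (wfm_step ar par P m) x" then show ?thesis using xl ple_antisym by blast
    next
      assume xm: "ple x m"
      then have "x = m \<or> ple (wfm_step ar par P x) m" using succ.IH x unfolding good_def by blast
      then show ?thesis
      proof
        assume "x = m" then show ?thesis unfolding ple_def by auto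
      qed (use infl ple_trans in blast)
    qed
  qed
next
  case (union Y)
  let ?U = "(\<Union> (fst ` Y), \<Union> (snd ` Y))"
  show ?case unfolding good_def
  proof (intro ballI impI)
    fix x assume x: "x \<in> wfm_stages ar par P" and xl: "ple x ?U"
    show "x = ?U \<or> ple (wfm_step ar par P x) ?U"
    proof (cases "\<exists>y\<in>Y. ple x y")
      case True
      then obtain y where y: "y \<in> Y" "ple x y" by blast
      have yT: "y \<in> wfm_stages ar par P" and gy: "good ar par P y" using union y by auto
      have yU: "ple y ?U" using y unfolding ple_def by auto
      from gy y x have "x = y \<or> ple (wfm_step ar par P x) y" unfolding good_def by blast
      then show ?thesis
      proof
        assume xy: "x = y"
        show ?thesis
        proof (cases "\<forall>y'\<in>Y. ple y' x")
          case True
          then have "ple ?U x" unfolding ple_def by auto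
          then show ?thesis using xl ple_antisym by blast
        next
          case False
          then obtain y' where y': "y' \<in> Y" "\<not> ple y' x" by blast
          have "y' \<in> wfm_stages ar par P" using union y' by auto
          from L1[OF yT gy this] y' xy have "ple (wfm_step ar par P x) y'" by blast
          moreover have "ple y' ?U" using y' unfolding ple_def by auto
          ultimately show ?thesis using ple_trans by blast
        qed
      next
        assume "ple (wfm_step ar par P x) y" then show ?thesis using yU ple_trans by blast
      qed
    next
      case False
      have "\<forall>y\<in>Y. ple (wfm_step ar par P y) x"
      proof
        fix y assume y: "y \<in> Y"
        have yT: "y \<in> wfm_stages ar par P" and gy: "good ar par P y" using union y by auto
        from L1[OF yT gy x] False y show "ple (wfm_step ar par P y) x" by blast
      qed
      then have "\<forall>y\<in>Y. ple y x" using infl ple_trans by blast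
      then have "ple ?U x" unfolding ple_def by auto
      then show ?thesis using xl ple_antisym by blast
    qed
  qed
qed

lemma chain:
  "n \<in> wfm_stages ar par P \<Longrightarrow> m \<in> wfm_stages ar par P \<Longrightarrow> ple n m \<or> ple (wfm_step ar par P m) n"
  using L1 L2 by blast


lemma lit_in_mono: "lit_in L S \<Longrightarrow> S \<subseteq> S' \<Longrightarrow> lit_in L S'"
  by (cases L) auto

lemma mono_TrueOp: "mono (TrueOp ar P I)"
  unfolding mono_def TrueOp_def using lit_in_mono by blast

lemma mono_FalseOp: "mono (FalseOp ar par P I)"
  unfolding mono_def FalseOp_def using lit_in_mono by blast

lemma TI_disj: "A \<in> TI ar P I \<Longrightarrow> A \<notin> fst I"
proof -
  assume "A \<in> TI ar P I"
  then have "A \<in> TrueOp ar P I (TI ar P I)"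
    unfolding TI_def using lfp_unfold[OF mono_TrueOp] by blast
  then show ?thesis unfolding TrueOp_def by blast
qed

lemma FI_disj: "A \<in> FI ar par P I \<Longrightarrow> A \<notin> snd I"
proof -
  assume "A \<in> FI ar par P I"
  then have "A \<in> FalseOp ar par P I (FI ar par P I)"
    unfolding FI_def using gfp_unfold[OF mono_FalseOp] by blast
  then show ?thesis unfolding FalseOp_def by blast
qed

lemma fix_iff: "wfm_step ar par P I = I \<longleftrightarrow> TI ar P I = {} \<and> FI ar par P I = {}"
proof
  assume h: "wfm_step ar par P I = I"
  then have "TI ar P I \<subseteq> fst I" "FI ar par P I \<subseteq> snd I"
    unfolding wfm_step_def by (metis Un_upper2 fst_conv, metis Un_upper2 snd_conv)
  then show "TI ar P I = {} \<and> FI ar par P I = {}" using TI_disj FI_disj by blast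
qed (simp add: wfm_step_def)

definition Top where "Top ar par P = (\<Union> (fst ` wfm_stages ar par P), \<Union> (snd ` wfm_stages ar par P))"

lemma Top_in: "Top ar par P \<in> wfm_stages ar par P"
  unfolding Top_def by (rule wfm_stages.union) simp

lemma le_Top: "I \<in> wfm_stages ar par P \<Longrightarrow> ple I (Top ar par P)"
  unfolding Top_def ple_def by auto

lemma Top_fix: "wfm_step ar par P (Top ar par P) = Top ar par P"
  using le_Top[OF wfm_stages.succ[OF Top_in]] infl ple_antisym by blast

lemma fix_unique:
  assumes I: "I \<in> wfm_stages ar par P" and f: "wfm_step ar par P I = I"
  shows "I = Top ar par P"
proof -
  have g: "good ar par P I" using L2[OF I] .
  have "\<forall>n. n \<in> wfm_stages ar par P \<longrightarrow> ple n I"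
  proof (intro allI impI)
    fix n assume "n \<in> wfm_stages ar par P"
    then show "ple n I"
    proof (induction n rule: wfm_stages.induct)
      case (succ n)
      then have "n = I \<or> ple (wfm_step ar par P n) I" using g unfolding good_def by blast
      then show ?case using f unfolding ple_def by auto
    next
      case (union Y)
      then show ?case unfolding ple_def by auto
    qed
  qed
  then have "ple (Top ar par P) I" using Top_in by blast
  then show ?thesis using le_Top[OF I] ple_antisym by blast
qed

lemma WFM_Top: "WFM ar par P = Top ar par P"
  unfolding WFM_def
proof (rule the_equality)
  show "Top ar par P \<in> wfm_stages ar par P \<and> TI ar P (Top ar par P) = {} \<and> FI ar par P (Top ar par P) = {}"
    using Top_in Top_fix fix_iff by blast
next
  fix I assume "I \<in> wfm_stages ar par P \<and> TI ar P I = {} \<and> FI ar par P I = {}"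
  then show "I = Top ar par P" using fix_unique fix_iff by blast
qed


definition wit where
  "wit ar P I Tr A c \<theta> \<longleftrightarrow> c\<in>P \<and> ground_subst ar c \<theta> \<and> A = asubst \<theta> (fst c) \<and>
     (\<forall>L\<in>set (snd c). lit_true I (lsubst \<theta> L) \<or> lit_in (lsubst \<theta> L) Tr)"

lemma TrueOp_wit: "A \<in> TrueOp ar P I Tr \<longleftrightarrow> A \<notin> fst I \<and> (\<exists>c \<theta>. wit ar P I Tr A c \<theta>)"
  unfolding TrueOp_def wit_def by blast

lemma wit_mono: "wit ar P I Tr A c \<theta> \<Longrightarrow> Tr \<subseteq> Tr' \<Longrightarrow> wit ar P I Tr' A c \<theta>"
  unfolding wit_def using lit_in_mono by metis

lemma iter_Suc_mono: "((TrueOp ar P I) ^^ n) {} \<subseteq> ((TrueOp ar P I) ^^ Suc n) {}"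
proof (induction n)
  case (Suc n)
  show ?case using monoD[OF mono_TrueOp Suc.IH] by simp
qed simp

lemma iter_mono: "n \<le> m \<Longrightarrow> ((TrueOp ar P I) ^^ n) {} \<subseteq> ((TrueOp ar P I) ^^ m) {}"
  using lift_Suc_mono_le[of "\<lambda>n. ((TrueOp ar P I) ^^ n) {}", OF iter_Suc_mono] by blast

lemma iter_le_TI: "((TrueOp ar P I) ^^ n) {} \<subseteq> TI ar P I"
proof (induction n)
  case (Suc n)
  have eq: "TI ar P I = TrueOp ar P I (TI ar P I)" unfolding TI_def by (rule lfp_unfold[OF mono_TrueOp])
  have "((TrueOp ar P I) ^^ Suc n) {} = TrueOp ar P I (((TrueOp ar P I) ^^ n) {})" by simp
  also have "\<dots> \<subseteq> TrueOp ar P I (TI ar P I)"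
    using monoD[OF mono_TrueOp Suc.IH] .
  also have "\<dots> = TI ar P I" using eq by simp
  finally show ?case .
qed simp

lemma TrueOp_iter_le_TI: "TrueOp ar P I (((TrueOp ar P I) ^^ n) {}) \<subseteq> TI ar P I"
  using iter_le_TI[where n="Suc n"] by simp

lemma finite_choice_mono:
  assumes "finite X" "\<forall>x\<in>X. \<exists>n::nat. Q x n" "\<And>x n m. n \<le> m \<Longrightarrow> Q x n \<Longrightarrow> Q x m"
  shows "\<exists>N. \<forall>x\<in>X. Q x N"
  using assms(1,2)
proof (induction X rule: finite_induct)
  case empty then show ?case by simp
next
  case (insert a X)
  then obtain N where N: "\<forall>x\<in>X. Q x N" by auto
  obtain k where k: "Q a k" using insert by auto
  have "\<forall>x\<in>insert a X. Q x (max N k)"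
    using N k assms(3) by (metis insert_iff max.cobounded1 max.cobounded2)
  then show ?case by blast
qed

lemma unique_stage:
  assumes I: "I \<in> wfm_stages ar par P" and J: "J \<in> wfm_stages ar par P"
    and AI: "A \<in> TI ar P I" and AJ: "A \<in> TI ar P J"
  shows "I = J"
proof -
  have "A \<in> fst (wfm_step ar par P J)" using AJ unfolding wfm_step_def by simp
  then have "\<not> ple (wfm_step ar par P J) I" using TI_disj[OF AI] unfolding ple_def by blast
  then have 1: "ple I J" using chain[OF I J] by blast
  have "A \<in> fst (wfm_step ar par P I)" using AI unfolding wfm_step_def by simp
  then have "\<not> ple (wfm_step ar par P I) J" using TI_disj[OF AJ] unfolding ple_def by blast
  then have "ple J I" using chain[OF J I] by blast
  with 1 show ?thesis using ple_antisym by blast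
qed

lemma TI_in_WFM:
  assumes I: "I \<in> wfm_stages ar par P" and A: "A \<in> TI ar P I"
  shows "A \<in> fst (WFM ar par P)"
proof -
  have "ple (wfm_step ar par P I) (WFM ar par P)"
    using le_Top[OF wfm_stages.succ[OF I]] WFM_Top by metis
  then show ?thesis using A unfolding ple_def wfm_step_def by auto
qed

lemma single_bound:
  "\<exists>L. \<forall>I\<in>wfm_stages ar par P. \<forall>n. A \<in> TrueOp ar P I (((TrueOp ar P I) ^^ n) {}) \<longrightarrow>
      (\<exists>c \<theta>. wit ar P I (((TrueOp ar P I) ^^ n) {}) A c \<theta> \<and> subst_size c \<theta> < L)"
proof (cases "\<exists>I\<in>wfm_stages ar par P. \<exists>n. A \<in> TrueOp ar P I (((TrueOp ar P I) ^^ n) {})")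
  case False then show ?thesis by blast
next
  case True
  then obtain I0 where I0: "I0 \<in> wfm_stages ar par P" and ex: "\<exists>n. A \<in> TrueOp ar P I0 (((TrueOp ar P I0) ^^ n) {})"
    by blast
  define n0 where "n0 = (LEAST n. A \<in> TrueOp ar P I0 (((TrueOp ar P I0) ^^ n) {}))"
  have An0: "A \<in> TrueOp ar P I0 (((TrueOp ar P I0) ^^ n0) {})"
    unfolding n0_def using LeastI_ex[OF ex] .
  then obtain c \<theta> where w: "wit ar P I0 (((TrueOp ar P I0) ^^ n0) {}) A c \<theta>"
    using TrueOp_wit by blast
  show ?thesis
  proof (intro exI[of _ "Suc (subst_size c \<theta>)"] ballI allI impI)
    fix I n assume I: "I \<in> wfm_stages ar par P" and A: "A \<in> TrueOp ar P I (((TrueOp ar P I) ^^ n) {})"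
    have "I = I0"
      by (rule unique_stage[OF I I0]) (use A An0 TrueOp_iter_le_TI in blast)+
    have "n0 \<le> n" unfolding n0_def using A \<open>I = I0\<close> by (intro Least_le) simp
    then have "wit ar P I0 (((TrueOp ar P I0) ^^ n) {}) A c \<theta>"
      by (rule wit_mono[OF w iter_mono])
    then have "wit ar P I (((TrueOp ar P I) ^^ n) {}) A c \<theta>" using \<open>I = I0\<close> by simp
    then show "\<exists>c' \<theta>'. wit ar P I (((TrueOp ar P I) ^^ n) {}) A c' \<theta>' \<and> subst_size c' \<theta>' < Suc (subst_size c \<theta>)"
      by blast
  qed
qed

lemma ex_wit_iff: "(\<exists>c \<theta>. wit ar P I Tr A c \<theta> \<and> subst_size c \<theta> < N) \<longleftrightarrow>
  (\<exists>c\<in>P. \<exists>\<theta>. ground_subst ar c \<theta> \<and> A = asubst \<theta> (fst c) \<and>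
         (\<forall>L\<in>set (snd c). lit_true I (lsubst \<theta> L) \<or> lit_in (lsubst \<theta> L) Tr) \<and>
         subst_size c \<theta> < N)"
  unfolding wit_def by blast

lemma dir1:
  assumes fin: "finite (fst (WFM ar par P))"
  shows "bounded_term_size ar par P"
proof -
  let ?Q = "\<lambda>A L. \<forall>I\<in>wfm_stages ar par P. \<forall>n. A \<in> TrueOp ar P I (((TrueOp ar P I) ^^ n) {}) \<longrightarrow>
      (\<exists>c \<theta>. wit ar P I (((TrueOp ar P I) ^^ n) {}) A c \<theta> \<and> subst_size c \<theta> < L)"
  have "\<exists>N. \<forall>A\<in>fst (WFM ar par P). ?Q A N"
  proof (rule finite_choice_mono[OF fin])
    show "\<forall>A\<in>fst (WFM ar par P). \<exists>N. ?Q A N" by (intro ballI) (rule single_bound)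
  next
    fix A and n m :: nat assume nm: "n \<le> m" and q: "?Q A n"
    show "?Q A m"
    proof (intro ballI allI impI)
      fix I k assume "I \<in> wfm_stages ar par P" "A \<in> TrueOp ar P I (((TrueOp ar P I) ^^ k) {})"
      then obtain c \<theta> where "wit ar P I (((TrueOp ar P I) ^^ k) {}) A c \<theta>" "subst_size c \<theta> < n"
        using bspec[OF q, THEN spec[of _ k], THEN mp] by blast
      then show "\<exists>c \<theta>. wit ar P I (((TrueOp ar P I) ^^ k) {}) A c \<theta> \<and> subst_size c \<theta> < m"
        using nm by (blast intro: order.strict_trans2)
    qed
  qed
  then obtain N where N: "\<forall>A\<in>fst (WFM ar par P). ?Q A N" by blast
  have main: "\<forall>I\<in>wfm_stages ar par P. \<forall>n. \<forall>A\<in>TrueOp ar P I (((TrueOp ar P I) ^^ n) {}).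
     \<exists>c \<theta>. wit ar P I (((TrueOp ar P I) ^^ n) {}) A c \<theta> \<and> subst_size c \<theta> < N"
  proof (intro ballI allI)
    fix I n A assume I: "I \<in> wfm_stages ar par P" and A: "A \<in> TrueOp ar P I (((TrueOp ar P I) ^^ n) {})"
    have "A \<in> fst (WFM ar par P)" by (rule TI_in_WFM[OF I]) (use A TrueOp_iter_le_TI in blast)
    then have QA: "?Q A N" using N by (rule bspec[rotated])
    show "\<exists>c \<theta>. wit ar P I (((TrueOp ar P I) ^^ n) {}) A c \<theta> \<and> subst_size c \<theta> < N"
      using bspec[OF QA I, THEN spec[of _ n], THEN mp, OF A] .
  qed
  then show ?thesis unfolding bounded_term_size_def Let_def ex_wit_iff[symmetric] by (rule exI[of _ N])
qed


lemma finite_tvars: "finite (tvars t)"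
  by (induction t) auto

lemma finite_avars: "finite (avars A)"
  by (cases A) (auto simp: finite_tvars)

lemma finite_cvars: "finite (cvars c)"
  unfolding cvars_def by (auto simp: finite_avars)

lemma tsubst_cong: "(\<And>x. x \<in> tvars t \<Longrightarrow> \<theta> x = \<theta>' x) \<Longrightarrow> tsubst \<theta> t = tsubst \<theta>' t"
  by (induction t) auto

lemma asubst_cong: "(\<And>x. x \<in> avars A \<Longrightarrow> \<theta> x = \<theta>' x) \<Longrightarrow> asubst \<theta> A = asubst \<theta>' A"
  by (cases A) (auto intro!: tsubst_cong)

lemma tsize_pos: "tsize t > 0"
  by (cases t) auto

lemma finite_ground_le:
  "finite {t :: ('f::finite, 'v) trm. ground_trm ar t \<and> tsize t \<le> k}"
proof (induction k)
  case 0
  have "{t :: ('f, 'v) trm. ground_trm ar t \<and> tsize t \<le> 0} = {}"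
    using tsize_pos by (metis (no_types, lifting) empty_Collect_eq le_zero_eq less_irrefl)
  then show ?case by (metis finite.emptyI)
next
  case (Suc k)
  let ?G = "{t :: ('f, 'v) trm. ground_trm ar t \<and> tsize t \<le> k}"
  have "{t :: ('f, 'v) trm. ground_trm ar t \<and> tsize t \<le> Suc k} \<subseteq>
        (\<Union>f\<in>UNIV. Fn f ` {ts. set ts \<subseteq> ?G \<and> length ts = ar f})"
  proof
    fix t :: "('f, 'v) trm" assume t: "t \<in> {t. ground_trm ar t \<and> tsize t \<le> Suc k}"
    show "t \<in> (\<Union>f\<in>UNIV. Fn f ` {ts. set ts \<subseteq> ?G \<and> length ts = ar f})"
    proof (cases t)
      case (Var x) then show ?thesis using t by (simp add: ground_trm_def)
    next
      case (Fn f ts)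
      have "set ts \<subseteq> ?G"
      proof
        fix s assume s: "s \<in> set ts"
        have "tsize s \<le> sum_list (map tsize ts)" using s by (simp add: member_le_sum_list)
        then show "s \<in> ?G" using t s Fn by (auto simp: ground_trm_def)
      qed
      then show ?thesis using t Fn by (auto simp: ground_trm_def)
    qed
  qed
  moreover have "finite (\<Union>f\<in>UNIV. Fn f ` {ts. set ts \<subseteq> ?G \<and> length ts = ar f})"
    using Suc by (auto intro!: finite_lists_length_eq)
  ultimately show ?case by (rule finite_subset)
qed

definition SL where
  "SL ar P L = {A. \<exists>c\<in>P. \<exists>\<theta>. ground_subst ar c \<theta> \<and> A = asubst \<theta> (fst c) \<and> subst_size c \<theta> < L}"

lemma finite_SL:
  fixes ar :: "'f::finite \<Rightarrow> nat" and P :: "('p, 'f, 'v) clause set"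
  assumes fP: "finite P"
  shows "finite (SL ar P L)"
proof -
  let ?G = "{t :: ('f, 'v) trm. ground_trm ar t \<and> tsize t \<le> L}"
  have "SL ar P L \<subseteq> (\<Union>c\<in>P. (\<lambda>g. asubst g (fst c)) ` PiE (cvars c) (\<lambda>_. ?G))"
  proof
    fix A assume "A \<in> SL ar P L"
    then obtain c \<theta> where c: "c \<in> P" and g: "ground_subst ar c \<theta>" and A: "A = asubst \<theta> (fst c)"
      and s: "subst_size c \<theta> < L" unfolding SL_def by blast
    have r: "restrict \<theta> (cvars c) \<in> PiE (cvars c) (\<lambda>_. ?G)"
    proof (rule restrict_PiE_iff[THEN iffD2], intro ballI)
      fix x assume x: "x \<in> cvars c"
      have "tsize (\<theta> x) \<le> subst_size c \<theta>"
        unfolding subst_size_def using x finite_cvars[of c] by (intro member_le_sum) auto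
      then show "\<theta> x \<in> ?G" using g x s unfolding ground_subst_def by auto
    qed
    have e: "asubst (restrict \<theta> (cvars c)) (fst c) = asubst \<theta> (fst c)"
      by (rule asubst_cong) (simp add: cvars_def restrict_def)
    have "A \<in> (\<lambda>g. asubst g (fst c)) ` PiE (cvars c) (\<lambda>_. ?G)"
      unfolding A using e[symmetric] r by (rule image_eqI[where f="\<lambda>g. asubst g (fst c)"])
    then show "A \<in> (\<Union>c\<in>P. (\<lambda>g. asubst g (fst c)) ` PiE (cvars c) (\<lambda>_. ?G))"
      using c by (rule UN_I[rotated])
  qed
  moreover have "finite (\<Union>c\<in>P. (\<lambda>g. asubst g (fst c)) ` PiE (cvars c) (\<lambda>_. ?G))"
    by (intro finite_UN_I fP finite_imageI finite_PiE finite_cvars finite_ground_le)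
  ultimately show ?thesis by (rule finite_subset)
qed

lemma TI_le_iters: "TI ar P I \<subseteq> (\<Union>n. ((TrueOp ar P I) ^^ n) {})"
  unfolding TI_def
proof (rule lfp_lowerbound, rule subsetI)
  let ?U = "\<Union>n. ((TrueOp ar P I) ^^ n) {}"
  fix A assume "A \<in> TrueOp ar P I ?U"
  then have nA: "A \<notin> fst I" and "\<exists>c \<theta>. wit ar P I ?U A c \<theta>" using TrueOp_wit by blast+
  then obtain c \<theta> where w: "wit ar P I ?U A c \<theta>" by blast
  have "\<exists>N. \<forall>L\<in>set (snd c). lit_true I (lsubst \<theta> L) \<or> lit_in (lsubst \<theta> L) (((TrueOp ar P I) ^^ N) {})"
  proof (rule finite_choice_mono)
    show "\<forall>L\<in>set (snd c). \<exists>n. lit_true I (lsubst \<theta> L) \<or> lit_in (lsubst \<theta> L) (((TrueOp ar P I) ^^ n) {})"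
    proof
      fix L assume L: "L \<in> set (snd c)"
      then have h: "lit_true I (lsubst \<theta> L) \<or> lit_in (lsubst \<theta> L) ?U" using w unfolding wit_def by blast
      show "\<exists>n. lit_true I (lsubst \<theta> L) \<or> lit_in (lsubst \<theta> L) (((TrueOp ar P I) ^^ n) {})"
      proof (cases "lsubst \<theta> L")
        case (Pos B) then show ?thesis using h by auto
      next
        case (Neg B) then show ?thesis using h by auto
      qed
    qed
  next
    fix L and n m :: nat
    assume nm: "n \<le> m" and h: "lit_true I (lsubst \<theta> L) \<or> lit_in (lsubst \<theta> L) (((TrueOp ar P I) ^^ n) {})"
    show "lit_true I (lsubst \<theta> L) \<or> lit_in (lsubst \<theta> L) (((TrueOp ar P I) ^^ m) {})"
      using h lit_in_mono[OF _ iter_mono[OF nm]] by blast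
  qed simp
  then obtain N where N: "\<forall>L\<in>set (snd c). lit_true I (lsubst \<theta> L) \<or> lit_in (lsubst \<theta> L) (((TrueOp ar P I) ^^ N) {})"
    by blast
  have "wit ar P I (((TrueOp ar P I) ^^ N) {}) A c \<theta>" using w N unfolding wit_def by blast
  then have "A \<in> TrueOp ar P I (((TrueOp ar P I) ^^ N) {})" using nA TrueOp_wit by blast
  then have "A \<in> ((TrueOp ar P I) ^^ Suc N) {}" by simp
  then show "A \<in> ?U" by blast
qed

lemma dir2:
  fixes ar :: "'f::finite \<Rightarrow> nat" and P :: "('p, 'f, 'v) clause set"
  assumes fP: "finite P" and b: "bounded_term_size ar par P"
  shows "finite (fst (WFM ar par P))"
proof -
  obtain L where L: "\<forall>I\<in>wfm_stages ar par P. \<forall>n. \<forall>A\<in>TrueOp ar P I (((TrueOp ar P I) ^^ n) {}).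
     \<exists>c \<theta>. wit ar P I (((TrueOp ar P I) ^^ n) {}) A c \<theta> \<and> subst_size c \<theta> < L"
    using b unfolding bounded_term_size_def Let_def ex_wit_iff[symmetric] by blast
  have iters: "((TrueOp ar P I) ^^ n) {} \<subseteq> SL ar P L" if I: "I \<in> wfm_stages ar par P" for I n
  proof (cases n)
    case 0 then show ?thesis by simp
  next
    case (Suc m)
    show ?thesis
    proof
      fix A assume "A \<in> ((TrueOp ar P I) ^^ n) {}"
      then have A: "A \<in> TrueOp ar P I (((TrueOp ar P I) ^^ m) {})" using Suc by simp
      obtain c \<theta> where "wit ar P I (((TrueOp ar P I) ^^ m) {}) A c \<theta>" "subst_size c \<theta> < L"
        using bspec[OF spec[OF bspec[OF L I], of m] A] by blast
      then show "A \<in> SL ar P L" unfolding SL_def wit_def by blast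
    qed
  qed
  have "fst I \<subseteq> SL ar P L" if "I \<in> wfm_stages ar par P" for I
    using that
  proof (induction I rule: wfm_stages.induct)
    case (succ I)
    have "TI ar P I \<subseteq> SL ar P L" using TI_le_iters iters[OF succ.hyps(1)] by blast
    then show ?case using succ.IH unfolding wfm_step_def by simp
  next
    case (union Y)
    then show ?case by auto
  qed
  then have "fst (WFM ar par P) \<subseteq> SL ar P L" using Top_in WFM_Top by metis
  then show ?thesis using finite_SL[OF fP] by (rule finite_subset)
qed

theorem theorem1:
  fixes ar :: "'f::finite \<Rightarrow> nat" and par :: "'p \<Rightarrow> nat"
    and P :: "('p, 'f, 'v) clause set"
  assumes "normal_program ar par P"
  shows "finite (fst (WFM ar par P)) \<longleftrightarrow> bounded_term_size ar par P"
  using dir1 dir2 assms unfolding normal_program_def by blast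

end
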